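(* Let $q$ be a power of $2$ and let $\alpha,\beta \in \mathbb{F}_{q^2}$ be such that the line $\{(\alpha t+\beta, t)\}$ is not tangent to the Hermitian curve $x^q+x=y^{q+1}$. Let $\gamma = \beta+\beta^q$, let $\sigma_0,\dots,\sigma_q$ be the roots of $p(t) = t^{q+1} + \alpha^q t^q + \alpha t + \gamma$, and $P_k = \sum_{i=0}^q \sigma_i^k$. Then for all $0 \leq k < q$, $P_k = \alpha^{qk}$ and $P_{kq} = \alpha^k$. *)

theory Defs
  imports "HOL-Computational_Algebra.Polynomial"
begin

definition on_hermitian :: "nat \<Rightarrow> 'a::field \<Rightarrow> 'a \<Rightarrow> bool" where
  "on_hermitian q x y \<longleftrightarrow> x ^ q + x = y ^ (q + 1)"

text \<open>The line {(alpha*t + beta, t)} is tangent to the Hermitian curve: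
  it passes through a point (x0, y0) = (alpha*t0 + beta, t0) of the curve at which
  its direction vector (alpha, 1) is annihilated by the gradient of
  F(x,y) = x^q + x - y^(q+1), i.e. dF = (q x^(q-1) + 1, -(q+1) y^q).\<close>
definition line_tangent_hermitian :: "nat \<Rightarrow> 'a::field \<Rightarrow> 'a \<Rightarrow> bool" where
  "line_tangent_hermitian q \<alpha> \<beta> \<longleftrightarrow>
     (\<exists>t0. on_hermitian q (\<alpha> * t0 + \<beta>) t0 \<and>
        (of_nat q * (\<alpha> * t0 + \<beta>) ^ (q - 1) + 1) * \<alpha> - of_nat (q + 1) * t0 ^ q = 0)"

end

theory Submission
  imports Defs
begin

lemma synth_uniq:
  fixes p g :: "'b::field poly"
  assumes "[:-c,1:] * g + [:r:] = p"
  shows "synthetic_div p c = g"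
proof -
  have "p + smult c g = pCons r g"
    using assms[symmetric] by (simp add: algebra_simps)
  thus ?thesis using synthetic_div_unique by metis
qed

lemma synth_mult_root:
  fixes p h :: "'b::field poly"
  assumes "poly p s = 0"
  shows "synthetic_div (h * p) s = h * synthetic_div p s"
proof (rule synth_uniq[where r = 0])
  have "[:-s,1:] * synthetic_div p s + [:poly p s:] = p" by (rule synthetic_div_correct')
  with assms have eq: "p = [:-s,1:] * synthetic_div p s" by simp
  have "h * p = [:-s,1:] * (h * synthetic_div p s)"
    using arg_cong[OF eq, of "\<lambda>x. h * x"] by (metis mult.left_commute)
  thus "[:- s, 1:] * (h * synthetic_div p s) + [:0:] = h * p"
    by simp
qed

lemma pderiv_prod_roots:
  fixes S :: "'b::field multiset"
  shows "pderiv (prod_mset (image_mset (\<lambda>s. [:-s,1:]) S))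
         = (\<Sum>s\<in>#S. synthetic_div (prod_mset (image_mset (\<lambda>s. [:-s,1:]) S)) s)"
proof (induction S)
  case empty
  then show ?case by simp
next
  case (add a S)
  define p where "p = prod_mset (image_mset (\<lambda>s. [:-s,1:]) S)"
  have roots: "poly p s = 0" if "s \<in># S" for s
    using that unfolding p_def
    by (induction S) (auto simp: poly_prod_mset)
  have A: "synthetic_div ([:-a,1:] * p) a = p"
    by (rule synth_uniq[where r = 0]) simp
  have B: "(\<Sum>s\<in>#S. synthetic_div ([:-a,1:] * p) s) = (\<Sum>s\<in>#S. [:-a,1:] * synthetic_div p s)"
    by (rule arg_cong[where f = sum_mset], rule image_mset_cong) (metis synth_mult_root roots)
  have C: "(\<Sum>s\<in>#S. [:-a,1:] * synthetic_div p s) = [:-a,1:] * (\<Sum>s\<in>#S. synthetic_div p s)"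
    by (induction S) (auto simp: algebra_simps)
  have d: "pderiv [:-a,1:] = 1" by (simp add: pderiv_pCons)
  have "pderiv ([:-a,1:] * p) = [:-a,1:] * pderiv p + p"
    by (simp only: pderiv_mult d mult_1_right)
  note D = this
  have IH: "pderiv p = (\<Sum>s\<in>#S. synthetic_div p s)" using add.IH unfolding p_def .
  have e: "prod_mset (image_mset (\<lambda>s. [:-s,1:]) (add_mset a S)) = [:-a,1:] * p"
    by (simp add: p_def)
  show ?case unfolding e unfolding image_mset_add_mset sum_mset.add_mset A B C D IH
    by (simp only: add.commute)
qed

lemma degree_prod_roots:
  fixes S :: "'b::field multiset"
  shows "degree (prod_mset (image_mset (\<lambda>s. [:-s,1:]) S)) = size S"
proof (induction S)
  case empty
  then show ?case by simp
next
  case (add a S)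
  have nz: "prod_mset (image_mset (\<lambda>s. [:-s,1:]) S) \<noteq> 0"
    by (auto simp: prod_mset_zero_iff)
  have "degree ([:-a,1:] * prod_mset (image_mset (\<lambda>s. [:-s,1:]) S))
     = degree [:-a,1:] + degree (prod_mset (image_mset (\<lambda>s. [:-s,1:]) S))"
    by (rule degree_mult_eq) (use nz in auto)
  then show ?case using add by simp
qed

lemma coeff_sum_mset:
  "coeff (\<Sum>s\<in>#S. g s) n = (\<Sum>s\<in>#S. coeff (g s) n)"
  by (induction S) auto

lemma frob:
  fixes x y :: "'b::field"
  assumes two: "(2::'b) = 0"
  shows "(x + y) ^ (2 ^ m) = x ^ (2 ^ m) + y ^ (2 ^ m)"
proof (induction m)
  case 0
  then show ?case by simp
next
  case (Suc m)
  have "(x + y) ^ (2 ^ Suc m) = ((x + y) ^ (2 ^ m))^2"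
    by (simp add: power_mult[symmetric] mult.commute)
  also have "\<dots> = (x ^ (2 ^ m) + y ^ (2 ^ m))^2" using Suc by simp
  also have "\<dots> = (x ^ (2 ^ m))^2 + (y ^ (2 ^ m))^2"
    by (simp add: power2_sum two)
  also have "\<dots> = x ^ (2 ^ Suc m) + y ^ (2 ^ Suc m)"
    by (simp add: power_mult[symmetric] mult.commute)
  finally show ?case .
qed

lemma frob_sum:
  fixes g :: "'c \<Rightarrow> 'b::field"
  assumes two: "(2::'b) = 0"
  shows "(\<Sum>s\<in>#S. g s) ^ (2 ^ m) = (\<Sum>s\<in>#S. g s ^ (2 ^ m))"
  by (induction S) (simp_all add: frob[OF two])

lemma field_power_card:
  fixes x :: "'a::{field,finite}"
  shows "x ^ card (UNIV :: 'a set) = x"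
proof (cases "x = 0")
  case False
  have "x * (\<Prod>y\<in>UNIV-{0}. x * y) = x * x ^ (card (UNIV :: 'a set) - 1) * \<Prod>(UNIV-{0})"
    by (simp add: prod.distrib mult_ac)
  also have "x * x ^ (card (UNIV :: 'a set) - 1) = x ^ Suc (card (UNIV :: 'a set) - 1)"
    by (subst power_Suc) auto
  also have "Suc (card (UNIV :: 'a set) - 1) = card (UNIV :: 'a set)"
    using finite_UNIV_card_ge_0[where ?'a = 'a] by simp
  also have "(\<Prod>y\<in>UNIV-{0}. x * y) = (\<Prod>y\<in>UNIV-{0}. y)"
    by (rule prod.reindex_bij_witness[of _ "\<lambda>y. y / x" "\<lambda>y. x * y"]) (use False in auto)
  finally show ?thesis
    by simp
qed (use finite_UNIV_card_ge_0[where ?'a = 'a] in auto)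

lemma of_nat_card_zero:
  "of_nat (card (UNIV :: 'a set)) = (0::'a::{field,finite})"
proof -
  have "(\<Sum>x\<in>(UNIV::'a set). x + 1) = (\<Sum>x\<in>UNIV. x)"
    by (rule sum.reindex_bij_witness[of _ "\<lambda>y. y - 1" "\<lambda>y. y + 1"]) auto
  thus ?thesis by (simp add: sum.distrib)
qed

lemma synth_coeff:
  fixes P :: "'b::field poly"
  assumes deg: "degree P = q + 1" and c1: "coeff P (q + 1) = 1" and cq: "coeff P q = a"
    and c0: "\<And>i. 2 \<le> i \<Longrightarrow> i < q \<Longrightarrow> coeff P i = 0"
    and k: "1 \<le> k" "k < q"
  shows "coeff (synthetic_div P s) (q - k) = s ^ k + a * s ^ (k - 1)"
proof -
  define Q where "Q = synthetic_div P s"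
  have corr: "[:-s,1:] * Q + [:poly P s:] = P" unfolding Q_def by (rule synthetic_div_correct')
  have rec: "coeff Q j = coeff P (Suc j) + s * coeff Q (Suc j)" for j
  proof -
    have "coeff P (Suc j) = coeff ([:-s,1:] * Q + [:poly P s:]) (Suc j)" using corr by simp
    also have "\<dots> = coeff Q j - s * coeff Q (Suc j)" by simp
    finally show ?thesis by simp
  qed
  have dQ: "degree Q = q" unfolding Q_def using deg by (simp add: degree_synthetic_div)
  have "coeff Q (Suc q) = 0" using dQ by (simp add: coeff_eq_0)
  with rec[of q] c1 have cQq: "coeff Q q = 1" by simp
  have "1 \<le> k \<longrightarrow> k < q \<longrightarrow> coeff Q (q - k) = s ^ k + a * s ^ (k - 1)"
  proof (induction k)
    case 0
    then show ?case by simp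
  next
    case (Suc k)
    show ?case
    proof (intro impI)
      assume h: "1 \<le> Suc k" "Suc k < q"
      show "coeff Q (q - Suc k) = s ^ Suc k + a * s ^ (Suc k - 1)"
      proof (cases "k = 0")
        case True
        have "Suc (q - 1) = q" using h by simp
        then show ?thesis using rec[of "q - 1"] cQq cq True by (simp add: algebra_simps)
      next
        case False
        have e: "Suc (q - Suc k) = q - k" using h by simp
        have z: "coeff P (q - k) = 0" using h False by (intro c0) auto
        have ih: "coeff Q (q - k) = s ^ k + a * s ^ (k - 1)" using Suc.IH h False by simp
        have "coeff Q (q - Suc k) = s * coeff Q (q - k)" using rec[of "q - Suc k"] e z by simp
        also have "\<dots> = s ^ Suc k + a * s ^ k" unfolding ih using False
          by (cases k) (simp_all add: algebra_simps)
        finally show ?thesis by simp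
      qed
    qed
  qed
  with k show ?thesis unfolding Q_def by simp
qed

lemma newton_step:
  fixes S :: "'b::field multiset"
  defines "P \<equiv> prod_mset (image_mset (\<lambda>s. [:-s,1:]) S)"
  assumes deg: "degree P = q + 1" and c1: "coeff P (q + 1) = 1" and cq: "coeff P q = a"
    and c0: "\<And>i. 2 \<le> i \<Longrightarrow> i < q \<Longrightarrow> coeff P i = 0"
    and two: "(2::'b) = 0" and oq: "(of_nat q :: 'b) = 0"
    and k: "1 \<le> k" "k < q"
  shows "(\<Sum>s\<in>#S. s ^ k) = a * (\<Sum>s\<in>#S. s ^ (k - 1))"
proof -
  have z: "coeff (pderiv P) (q - k) = 0"
  proof (cases "k = 1")
    case True
    then have "Suc (q - k) = q" using k by simp
    then show ?thesis using oq cq by (simp only: coeff_pderiv mult_zero_left)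
  next
    case False
    then have "2 \<le> Suc (q - k)" "Suc (q - k) < q" using k by auto
    then have "coeff P (Suc (q - k)) = 0" by (rule c0)
    then show ?thesis by (simp only: coeff_pderiv mult_zero_right)
  qed
  have "0 = coeff (pderiv P) (q - k)" using z by (rule sym)
  also have "coeff (pderiv P) (q - k) = (\<Sum>s\<in>#S. coeff (synthetic_div P s) (q - k))"
    unfolding P_def pderiv_prod_roots coeff_sum_mset ..
  also have "\<dots> = (\<Sum>s\<in>#S. s ^ k + a * s ^ (k - 1))"
    by (rule arg_cong[where f = sum_mset], rule image_mset_cong)
       (rule synth_coeff[OF deg c1 cq c0 k], auto)
  also have "\<dots> = (\<Sum>s\<in>#S. s ^ k) + a * (\<Sum>s\<in>#S. s ^ (k - 1))"
    by (simp only: sum_mset.distrib sum_mset_distrib_left image_mset_add_mset)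
  finally have sum0: "(\<Sum>s\<in>#S. s ^ k) + a * (\<Sum>s\<in>#S. s ^ (k - 1)) = 0" by (rule sym)
  have cancel: "x = y" if xy: "x + y = 0" for x y :: 'b
  proof -
    have "x = (x + y) - y" by simp
    also have "\<dots> = - y" using xy by simp
    finally have x1: "x = - y" .
    have "y + y = 2 * y" by (rule mult_2[symmetric])
    also have "\<dots> = 0 * y" using two by (simp only:)
    also have "\<dots> = 0" by (rule mult_zero_left)
    finally have yy: "y + y = 0" .
    have "- y = (y + y) - y" using yy by simp
    also have "\<dots> = y" by simp
    finally have y1: "- y = y" .
    show "x = y" using x1 y1 by (rule trans)
  qed
  show ?thesis by (rule cancel[OF sum0])
qed

theorem mainTheorem5:
  fixes q m :: nat and \<alpha> \<beta> :: "'a::{field,finite}"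
    and f :: "'a \<Rightarrow> 'b::field" and S :: "'b multiset"
  assumes q_pow: "q = 2 ^ m"
    and card: "card (UNIV :: 'a set) = q ^ 2"
    and f_add: "\<And>x y. f (x + y) = f x + f y"
    and f_mult: "\<And>x y. f (x * y) = f x * f y"
    and f_one: "f 1 = 1"
    and not_tangent: "\<not> line_tangent_hermitian q \<alpha> \<beta>"
    and roots: "map_poly f (monom 1 (q + 1) + monom (\<alpha> ^ q) q + monom \<alpha> 1 + [:\<beta> + \<beta> ^ q:])
                = prod_mset (image_mset (\<lambda>s. [:- s, 1:]) S)"
  shows "\<forall>k < q. sum_mset (image_mset (\<lambda>s. s ^ k) S) = f \<alpha> ^ (q * k)
               \<and> sum_mset (image_mset (\<lambda>s. s ^ (k * q)) S) = f \<alpha> ^ k"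
proof -
  have f0: "f 0 = 0"
  proof -
    have "f 0 + f 0 = f 0 + 0" using f_add[of 0 0] by simp
    then show ?thesis by (rule add_left_imp_eq)
  qed
  have fpow: "f (x ^ n) = f x ^ n" for x n
    by (induction n) (simp_all add: f_one f_mult)
  have "card {0, 1::'a} \<le> card (UNIV :: 'a set)" by (rule card_mono) auto
  then have "2 \<le> q ^ 2" using card by simp
  then have m1: "m \<ge> 1" using q_pow by (cases m) auto
  have "(2::nat) ^ 1 \<le> 2 ^ m" using m1 by (rule power_increasing) simp
  then have q2: "q \<ge> 2" using q_pow by simp
  have "(of_nat (2 ^ (2 * m)) :: 'a) = 0" using of_nat_card_zero[where 'a='a] card q_pow
    by (simp add: power_mult[symmetric] mult.commute)
  then have "(2::'a) ^ (2 * m) = 0" by simp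
  then have two_a: "(2::'a) = 0" by simp
  have two_b: "(2::'b) = 0"
  proof -
    have "f (1 + 1) = f 0" using two_a by (simp add: one_add_one)
    thus ?thesis using f_add[of 1 1] f_one f0 by (simp add: one_add_one)
  qed
  have oq: "(of_nat q :: 'b) = 0"
  proof -
    have "(of_nat q :: 'b) = 2 ^ m" using q_pow by simp
    also have "\<dots> = 0" using two_b m1 by (cases m) auto
    finally show ?thesis .
  qed
  define p0 where "p0 = monom 1 (q + 1) + monom (\<alpha> ^ q) q + monom \<alpha> 1 + [:\<beta> + \<beta> ^ q:]"
  define P where "P = prod_mset (image_mset (\<lambda>s. [:- s, 1:]) S)"
  have PP: "map_poly f p0 = P" using roots unfolding p0_def P_def .
  have cP: "coeff P n = f (coeff p0 n)" for n
    unfolding PP[symmetric] by (simp add: coeff_map_poly f0)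
  have cp0: "coeff p0 n = (if n = q + 1 then 1 else 0) + (if n = q then \<alpha> ^ q else 0)
      + (if n = 1 then \<alpha> else 0) + (if n = 0 then \<beta> + \<beta> ^ q else 0)" for n
    unfolding p0_def by (simp add: coeff_monom coeff_pCons split: nat.split)
  have c1: "coeff P (q + 1) = 1" using q2 by (simp add: cP cp0 f_one)
  have cq: "coeff P q = f \<alpha> ^ q" using q2 by (simp add: cP cp0 fpow)
  have c0: "coeff P i = 0" if "2 \<le> i" "i < q" for i using that by (simp add: cP cp0 f0)
  have chi: "coeff P n = 0" if "n > q + 1" for n using that by (simp add: cP cp0 f0)
  have deg: "degree P = q + 1"
  proof (rule antisym)
    show "degree P \<le> q + 1" by (rule degree_le) (use chi in auto)
    show "q + 1 \<le> degree P" by (rule le_degree) (use c1 in simp)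
  qed
  have size: "size S = q + 1" using deg degree_prod_roots[of S] unfolding P_def by simp
  have P0: "(\<Sum>s\<in>#S. s ^ 0) = 1" using size oq by simp
  have Pk: "k < q \<Longrightarrow> (\<Sum>s\<in>#S. s ^ k) = f \<alpha> ^ (q * k)" for k
  proof (induction k)
    case 0
    then show ?case using P0 by simp
  next
    case (Suc k)
    have "(\<Sum>s\<in>#S. s ^ Suc k) = f \<alpha> ^ q * (\<Sum>s\<in>#S. s ^ (Suc k - 1))"
      using newton_step[of S q "f \<alpha> ^ q" "Suc k"] deg c1 cq c0 two_b oq Suc.prems
      unfolding P_def by simp
    also have "\<dots> = f \<alpha> ^ q * f \<alpha> ^ (q * k)" using Suc by simp
    also have "\<dots> = f \<alpha> ^ (q * Suc k)" by (simp add: power_add)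
    finally show ?case .
  qed
  have fa: "f \<alpha> ^ (q * q) = f \<alpha>"
  proof -
    have "\<alpha> ^ (q * q) = \<alpha>" using field_power_card[of \<alpha>] card by (simp add: power2_eq_square)
    then show ?thesis using fpow[of \<alpha> "q * q"] by simp
  qed
  show ?thesis
  proof (intro allI impI conjI)
    fix k assume k: "k < q"
    show "(\<Sum>s\<in>#S. s ^ k) = f \<alpha> ^ (q * k)" using Pk[OF k] .
    have "(\<Sum>s\<in>#S. s ^ (k * q)) = (\<Sum>s\<in>#S. (s ^ k) ^ (2 ^ m))"
      by (simp add: power_mult q_pow)
    also have "\<dots> = (\<Sum>s\<in>#S. s ^ k) ^ (2 ^ m)" by (rule frob_sum[OF two_b, symmetric])
    also have "\<dots> = (f \<alpha> ^ (q * k)) ^ q" using Pk[OF k] q_pow by simp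
    also have "\<dots> = (f \<alpha> ^ (q * q)) ^ k" by (simp add: power_mult[symmetric] mult_ac)
    also have "\<dots> = f \<alpha> ^ k" using fa by simp
    finally show "(\<Sum>s\<in>#S. s ^ (k * q)) = f \<alpha> ^ k" .
  qed
qed

end
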